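(* Let $(W,\operatorname{supp}^W)$ be a PO-dilator and let $X$ be a partial order. Then every $\sigma\in W(X)$ has a unique normal form $\sigma=_{\mathrm{NF}}W(\iota_a)(\sigma_0)$, i.e. there are unique $a\in[X]^{<\omega}$ and $\sigma_0\in W(a)$ with $\sigma=W(\iota_a)(\sigma_0)$ and $\operatorname{supp}^W_a(\sigma_0)=a$. Moreover, for this normal form we have $a=\operatorname{supp}^W_X(\sigma)$.
   Context: A quasi embedding between partial orders $X,Y$ is a function $f:X\to Y$ such that $f(x)\leq_Y f(y)$ implies $x\leq_X y$; it is an embedding if the converse implication also holds. $\mathrm{PO}$ is the category of partial orders with quasi embeddings as morphisms. For a set $X$, $[X]^{<\omega}$ is the set of finite subsets of $X$, and for $f:X\to Y$ we put $[f]^{<\omega}(a)=\{f(x)\mid x\in a\}$. Subsets of partial orders are regarded as suborders; for $a\subseteq X$, $\iota_a:a\hookrightarrow X$ is the inclusion. A PO-dilator consists of a functor $W:\mathrm{PO}\to\mathrm{PO}$ such that $W(f)$ is an embedding whenever $f$ is an embedding, together with a natural transformation $\operatorname{supp}^W:W\Rightarrow[\cdot]^{<\omega}$ (functions $\operatorname{supp}^W_X:W(X)\to[X]^{<\omega}$ with $\operatorname{supp}^W_Y\circ W(f)=[f]^{<\omega}\circ\operatorname{supp}^W_X$ for all quasi embeddings $f:X\to Y$) satisfying the support condition: for every embedding $f:X\to Y$, $\operatorname{rng}(W(f))=\{\sigma\in W(Y)\mid \operatorname{supp}^W_Y(\sigma)\subseteq\operatorname{rng}(f)\}$. *)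

theory Defs
  imports Main
begin

text \<open>A partial order is represented by its (reflexive) order relation r;
its carrier is Field r.  Elements of all partial orders in the domain
category live in one ambient type 'u, those of the images in one type 'v.\<close>

definition is_po :: "'a rel \<Rightarrow> bool" where
  "is_po r \<longleftrightarrow> (\<forall>x\<in>Field r. (x, x) \<in> r) \<and> antisym r \<and> trans r"

definition restr :: "'a rel \<Rightarrow> 'a set \<Rightarrow> 'a rel" where
  "restr r a = r \<inter> (a \<times> a)"

definition quasi_emb :: "'a rel \<Rightarrow> 'b rel \<Rightarrow> ('a \<Rightarrow> 'b) \<Rightarrow> bool" where
  "quasi_emb r s f \<longleftrightarrow> f ` Field r \<subseteq> Field s \<and>
     (\<forall>x\<in>Field r. \<forall>y\<in>Field r. (f x, f y) \<in> s \<longrightarrow> (x, y) \<in> r)"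

definition emb :: "'a rel \<Rightarrow> 'b rel \<Rightarrow> ('a \<Rightarrow> 'b) \<Rightarrow> bool" where
  "emb r s f \<longleftrightarrow> f ` Field r \<subseteq> Field s \<and>
     (\<forall>x\<in>Field r. \<forall>y\<in>Field r. (f x, f y) \<in> s \<longleftrightarrow> (x, y) \<in> r)"

text \<open>A PO-dilator: object map Wo, morphism map Wm (taking domain, codomain and
the underlying function of a quasi embedding), and support transformation supp.\<close>
definition po_dilator ::
  "('u rel \<Rightarrow> 'v rel) \<Rightarrow> ('u rel \<Rightarrow> 'u rel \<Rightarrow> ('u \<Rightarrow> 'u) \<Rightarrow> 'v \<Rightarrow> 'v)
   \<Rightarrow> ('u rel \<Rightarrow> 'v \<Rightarrow> 'u set) \<Rightarrow> bool" where
  "po_dilator Wo Wm supp \<longleftrightarrow>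
     \<comment> \<open>W maps partial orders to partial orders\<close>
     (\<forall>X. is_po X \<longrightarrow> is_po (Wo X)) \<and>
     \<comment> \<open>W maps quasi embeddings to quasi embeddings\<close>
     (\<forall>X Y f. is_po X \<and> is_po Y \<and> quasi_emb X Y f \<longrightarrow> quasi_emb (Wo X) (Wo Y) (Wm X Y f)) \<and>
     \<comment> \<open>W f depends only on the morphism (f restricted to the carrier)\<close>
     (\<forall>X Y f g. is_po X \<and> is_po Y \<and> quasi_emb X Y f \<and> (\<forall>x\<in>Field X. f x = g x)
        \<longrightarrow> (\<forall>\<sigma>\<in>Field (Wo X). Wm X Y f \<sigma> = Wm X Y g \<sigma>)) \<and>
     \<comment> \<open>functoriality: identities\<close>
     (\<forall>X. is_po X \<longrightarrow> (\<forall>\<sigma>\<in>Field (Wo X). Wm X X id \<sigma> = \<sigma>)) \<and>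
     \<comment> \<open>functoriality: composition\<close>
     (\<forall>X Y Z f g. is_po X \<and> is_po Y \<and> is_po Z \<and> quasi_emb X Y f \<and> quasi_emb Y Z g
        \<longrightarrow> (\<forall>\<sigma>\<in>Field (Wo X). Wm X Z (g \<circ> f) \<sigma> = Wm Y Z g (Wm X Y f \<sigma>))) \<and>
     \<comment> \<open>embeddings are preserved\<close>
     (\<forall>X Y f. is_po X \<and> is_po Y \<and> emb X Y f \<longrightarrow> emb (Wo X) (Wo Y) (Wm X Y f)) \<and>
     \<comment> \<open>supp_X : W(X) \<rightarrow> [X]^<omega>\<close>
     (\<forall>X. is_po X \<longrightarrow> (\<forall>\<sigma>\<in>Field (Wo X). finite (supp X \<sigma>) \<and> supp X \<sigma> \<subseteq> Field X)) \<and>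
     \<comment> \<open>naturality of supp\<close>
     (\<forall>X Y f. is_po X \<and> is_po Y \<and> quasi_emb X Y f
        \<longrightarrow> (\<forall>\<sigma>\<in>Field (Wo X). supp Y (Wm X Y f \<sigma>) = f ` supp X \<sigma>)) \<and>
     \<comment> \<open>support condition\<close>
     (\<forall>X Y f. is_po X \<and> is_po Y \<and> emb X Y f
        \<longrightarrow> Wm X Y f ` Field (Wo X) = {\<sigma> \<in> Field (Wo Y). supp Y \<sigma> \<subseteq> f ` Field X})"

end

theory Submission
  imports Defs
begin

lemma field_restr:
  assumes "is_po X" "a \<subseteq> Field X"
  shows "Field (restr X a) = a"
proof
  show "Field (restr X a) \<subseteq> a" unfolding restr_def Field_def by auto
  show "a \<subseteq> Field (restr X a)"
  proof
    fix x assume "x \<in> a"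
    then have "(x,x) \<in> restr X a" using assms unfolding is_po_def restr_def by auto
    then show "x \<in> Field (restr X a)" by (auto simp: Field_def)
  qed
qed

lemma po_restr:
  assumes "is_po X" "a \<subseteq> Field X"
  shows "is_po (restr X a)"
  using assms field_restr[OF assms] unfolding is_po_def restr_def antisym_def trans_def
  by auto

lemma emb_restr:
  assumes "is_po X" "a \<subseteq> Field X"
  shows "emb (restr X a) X id"
  using assms field_restr[OF assms] unfolding emb_def restr_def by auto

lemma emb_inj:
  assumes "is_po s" "emb r s f" "antisym r" "x \<in> Field r" "y \<in> Field r" "f x = f y"
  shows "x = y"
proof -
  have "f x \<in> Field s" using assms(2,4) unfolding emb_def by auto
  then have "(f x, f x) \<in> s" using assms(1) unfolding is_po_def by auto
  then have "(f x, f y) \<in> s" "(f y, f x) \<in> s" using assms(6) by auto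
  then have "(x,y) \<in> r" "(y,x) \<in> r" using assms(2,4,5) unfolding emb_def by auto
  then show ?thesis using assms(3) unfolding antisym_def by auto
qed

theorem lemma2p2:
  fixes Wo :: "'u rel \<Rightarrow> 'v rel"
    and Wm :: "'u rel \<Rightarrow> 'u rel \<Rightarrow> ('u \<Rightarrow> 'u) \<Rightarrow> 'v \<Rightarrow> 'v"
    and supp :: "'u rel \<Rightarrow> 'v \<Rightarrow> 'u set"
    and X :: "'u rel" and \<sigma> :: 'v
  assumes "po_dilator Wo Wm supp"
    and "is_po X"
    and "\<sigma> \<in> Field (Wo X)"
  shows "(\<exists>!p. finite (fst p) \<and> fst p \<subseteq> Field X \<and>
              snd p \<in> Field (Wo (restr X (fst p))) \<and>
              \<sigma> = Wm (restr X (fst p)) X id (snd p) \<and>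
              supp (restr X (fst p)) (snd p) = fst p)
       \<and> (\<forall>a \<sigma>0. finite a \<and> a \<subseteq> Field X \<and> \<sigma>0 \<in> Field (Wo (restr X a)) \<and>
              \<sigma> = Wm (restr X a) X id \<sigma>0 \<and> supp (restr X a) \<sigma>0 = a
              \<longrightarrow> a = supp X \<sigma>)"
proof -
  note D0 = assms(1)[unfolded po_dilator_def]
  have Dpo: "\<And>Y. is_po Y \<Longrightarrow> is_po (Wo Y)" using D0 by (elim conjE; simp)
  have Demb: "\<And>Y Z f. is_po Y \<Longrightarrow> is_po Z \<Longrightarrow> emb Y Z f \<Longrightarrow> emb (Wo Y) (Wo Z) (Wm Y Z f)" using D0 by (elim conjE; simp)
  have Dsupp: "\<And>Y s. is_po Y \<Longrightarrow> s \<in> Field (Wo Y) \<Longrightarrow> finite (supp Y s) \<and> supp Y s \<subseteq> Field Y" using D0 by (elim conjE; simp)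
  have Dnat: "\<And>Y Z f s. is_po Y \<Longrightarrow> is_po Z \<Longrightarrow> quasi_emb Y Z f \<Longrightarrow> s \<in> Field (Wo Y) \<Longrightarrow> supp Z (Wm Y Z f s) = f ` supp Y s" using D0 by (elim conjE; simp)
  have Dsc: "\<And>Y Z f. is_po Y \<Longrightarrow> is_po Z \<Longrightarrow> emb Y Z f \<Longrightarrow> Wm Y Z f ` Field (Wo Y) = {s \<in> Field (Wo Z). supp Z s \<subseteq> f ` Field Y}" using D0 by (elim conjE; simp)
  have nat: "supp X (Wm (restr X a) X id \<sigma>0) = supp (restr X a) \<sigma>0"
    if "a \<subseteq> Field X" "\<sigma>0 \<in> Field (Wo (restr X a))" for a \<sigma>0
  proof -
    have "quasi_emb (restr X a) X id"
      using emb_restr[OF assms(2) that(1)] unfolding emb_def quasi_emb_def by auto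
    then show ?thesis using Dnat[OF po_restr[OF assms(2) that(1)] assms(2) _ that(2)] by simp
  qed
  have part2: "\<forall>a \<sigma>0. finite a \<and> a \<subseteq> Field X \<and> \<sigma>0 \<in> Field (Wo (restr X a)) \<and>
              \<sigma> = Wm (restr X a) X id \<sigma>0 \<and> supp (restr X a) \<sigma>0 = a
              \<longrightarrow> a = supp X \<sigma>"
    using nat by auto
  define a where "a = supp X \<sigma>"
  have fa: "finite a" "a \<subseteq> Field X" using Dsupp[OF assms(2,3)] a_def by auto
  have pa: "is_po (restr X a)" using po_restr[OF assms(2) fa(2)] .
  have ea: "emb (restr X a) X id" using emb_restr[OF assms(2) fa(2)] .
  have "\<sigma> \<in> Wm (restr X a) X id ` Field (Wo (restr X a))"
    using Dsc[OF pa assms(2) ea] assms(3) field_restr[OF assms(2) fa(2)] a_def by auto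
  then obtain \<sigma>0 where s0: "\<sigma>0 \<in> Field (Wo (restr X a))" "\<sigma> = Wm (restr X a) X id \<sigma>0"
    by auto
  have "supp X \<sigma> = supp (restr X a) \<sigma>0" using nat[OF fa(2) s0(1)] s0(2) by simp
  then have sp: "supp (restr X a) \<sigma>0 = a" using a_def by simp
  have uniq: "p = (a, \<sigma>0)" if H: "finite (fst p) \<and> fst p \<subseteq> Field X \<and>
              snd p \<in> Field (Wo (restr X (fst p))) \<and>
              \<sigma> = Wm (restr X (fst p)) X id (snd p) \<and>
              supp (restr X (fst p)) (snd p) = fst p" for p
  proof -
    have "fst p = a" using part2 H a_def by blast
    then have H2: "snd p \<in> Field (Wo (restr X a))" "\<sigma> = Wm (restr X a) X id (snd p)" using H by auto
    have pw: "is_po (Wo (restr X a))" "is_po (Wo X)" using Dpo pa assms(2) by auto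
    have "emb (Wo (restr X a)) (Wo X) (Wm (restr X a) X id)" using Demb[OF pa assms(2) ea] .
    then have "snd p = \<sigma>0"
      using emb_inj[OF pw(2) _ _ H2(1) s0(1)] pw(1) H2(2) s0(2) unfolding is_po_def by auto
    then show ?thesis using \<open>fst p = a\<close> by (cases p) auto
  qed
  have "\<exists>!p. finite (fst p) \<and> fst p \<subseteq> Field X \<and>
              snd p \<in> Field (Wo (restr X (fst p))) \<and>
              \<sigma> = Wm (restr X (fst p)) X id (snd p) \<and>
              supp (restr X (fst p)) (snd p) = fst p"
    apply (rule ex1I[of _ "(a, \<sigma>0)"])
    using fa s0 sp apply simp
    using uniq by blast
  then show ?thesis using part2 by blast
qed

end
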